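(* Let $m\in\mathbb N$, $b>0$, $\tau>\gamma_0$, let $\mathcal S=\{n(N)\}_{N=1}^\infty$ be an increasing sequence of positive integers, and let $(D_n)_{n\in\mathcal S}$ be positive constants (depending on $b,\tau,m$ but not on the functions below) such that $$\lim_{N\to\infty}D_{n(N)}e^{n(N)\psi(\tau)}=0.$$ For $n\in\mathcal S$ put $\sigma=\sigma_n:=n/(mb\tau)$. Then for every $\gamma>0$ there exist a constant $C=C(b,\tau,m,\gamma)$ and an integer $n_0=n_0(b,\tau,m,\gamma)$ such that for every $n\in\mathcal S$ with $n\ge n_0$ there is a finite set $\{X_1,\dots,X_\Lambda\}\subset Q^m_b$ with $\Lambda\le Cn^m$ such that $$\|f\|_{L_\infty(Q^m_b)}\le(1+\gamma)\max_{1\le j\le\Lambda}|f(X_j)|$$ for every entire function $f:\mathbb C^m\to\mathbb C$ satisfying $|f(w)|\le D_n\|f\|_{L_\infty(Q^m_b)}\exp(\sigma_n\sum_{j=1}^m|w_j|)$ for all $w\in\mathbb C^m$.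
   Context: $Q^m_b=\{x\in\mathbb R^m:\max_j|x_j|\le b\}$. $\psi(\tau):=\frac{\sqrt{1+\tau^2}}{\tau}-\log(\tau+\sqrt{1+\tau^2})$ for $\tau>0$; $\psi$ is strictly decreasing with a unique positive zero $\gamma_0=1.5088\ldots$, and $\psi(\tau)<0$ for $\tau>\gamma_0$. *)

theory Defs
  imports "HOL-Analysis.Analysis"
begin

definition psi :: "real \<Rightarrow> real" where
  "psi t = sqrt (1 + t\<^sup>2) / t - ln (t + sqrt (1 + t\<^sup>2))"

definition gamma0 :: real where
  "gamma0 = (THE g. g > 0 \<and> psi g = 0)"

definition cubeQ :: "real \<Rightarrow> (real^'m) set" where
  "cubeQ b = {x. \<forall>j. \<bar>x $ j\<bar> \<le> b}"

definition cembed :: "real^'m \<Rightarrow> complex^'m" where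
  "cembed x = (\<chi> j. complex_of_real (x $ j))"

text \<open>Entire function on C^m: complex (Frechet) differentiable at every point,
  i.e. the derivative is complex-linear.\<close>
definition entire_fun :: "(complex^'m \<Rightarrow> complex) \<Rightarrow> bool" where
  "entire_fun f \<longleftrightarrow> (\<forall>z. \<exists>L. (f has_derivative L) (at z) \<and>
      (\<forall>c v. L (c *s v) = c * L v))"

definition supQ :: "real \<Rightarrow> (complex^'m \<Rightarrow> complex) \<Rightarrow> real" where
  "supQ b f = Sup ((\<lambda>x. cmod (f (cembed x))) ` cubeQ b)"

end

theory Submission imports Defs "HOL-Complex_Analysis.Conformal_Mappings" begin

lemma bl_smult_vec: "bounded_linear (\<lambda>a::complex. a *s (e::complex^'m))"
proof (rule bounded_linear_intro[where K="norm e"])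
  show "\<And>x y. (x + y) *s e = x *s e + y *s e" by (simp add: vec_eq_iff algebra_simps)
  show "\<And>r x. (r *\<^sub>R x) *s e = r *\<^sub>R (x *s e)"
    by (simp add: vec_eq_iff vector_scalar_mult_def)
  fix x :: complex
  have "(\<lambda>i. norm ((x *s e) $ i)) = (\<lambda>i. norm x * norm (e $ i))"
    by (simp add: vector_scalar_mult_def norm_mult)
  then show "norm (x *s e) \<le> norm x * norm e"
    by (simp add: norm_vec_def L2_set_right_distrib)
qed

lemma slice_deriv:
  assumes "entire_fun f" and "(h has_field_derivative D) (at t)"
  shows "\<exists>D'. ((\<lambda>t. f (h t *s e + c0)) has_field_derivative D') (at t)"
proof -
  obtain L where L: "(f has_derivative L) (at (h t *s e + c0))" "\<And>c v. L (c *s v) = c * L v"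
    using assms(1) unfolding entire_fun_def by blast
  have h1: "((\<lambda>t. h t *s e) has_derivative (\<lambda>x. (D*x) *s e)) (at t)"
    using bounded_linear.has_derivative[OF bl_smult_vec[of e] assms(2)[unfolded has_field_derivative_def]] .
  have hq: "((\<lambda>t. h t *s e + c0) has_derivative (\<lambda>x. (D*x) *s e)) (at t)"
    by (rule has_derivative_add_const[OF h1])
  have c: "((\<lambda>t. f (h t *s e + c0)) has_derivative (\<lambda>x. L ((D*x) *s e))) (at t)"
    using has_derivative_compose[OF hq L(1)] unfolding o_def .
  have eq: "(\<lambda>x. L ((D*x) *s e)) = (\<lambda>x. (D * L e) * x)"
  proof
    fix x
    have "L ((D*x) *s e) = (D*x) * L e" by (rule L(2))
    also have "\<dots> = (D * L e) * x" by (simp add: ac_simps)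
    finally show "L ((D*x) *s e) = (D * L e) * x" .
  qed
  have "((\<lambda>t. f (h t *s e + c0)) has_derivative (\<lambda>x. (D * L e) * x)) (at t)"
    using c unfolding eq .
  then show ?thesis unfolding has_field_derivative_def by blast
qed

lemma cos_bound: "norm (cos (z::complex)) \<le> exp \<bar>Im z\<bar>"
proof -
  have "norm (cos z) \<le> (norm (exp(\<i> * z)) + norm (exp(-(\<i> * z)))) / 2"
    unfolding cos_exp_eq by (metis norm_divide norm_numeral norm_triangle_ineq divide_right_mono zero_le_numeral)
  also have "\<dots> = (exp (- Im z) + exp (Im z)) / 2" by simp
  also have "\<dots> \<le> exp \<bar>Im z\<bar>" by (cases "Im z \<ge> 0") auto
  finally show ?thesis .
qed

lemma psi_dec: assumes "0 < s" "s < t" shows "psi t < psi s"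
proof -
  have ab: "sqrt (1 + u\<^sup>2) / u = sqrt (1/u\<^sup>2 + 1)" if "u > 0" for u :: real
  proof -
    have "(1 + u\<^sup>2) / u\<^sup>2 = 1/u\<^sup>2 + 1" using that by (simp add: add_divide_distrib)
    then have "sqrt (1/u\<^sup>2 + 1) = sqrt (1 + u\<^sup>2) / sqrt (u\<^sup>2)" by (simp only: real_sqrt_divide[symmetric])
    also have "sqrt (u\<^sup>2) = u" using that by simp
    finally show ?thesis by simp
  qed
  have a: "sqrt (1 + t\<^sup>2) / t = sqrt (1/t\<^sup>2 + 1)" using assms ab by simp
  have b: "sqrt (1 + s\<^sup>2) / s = sqrt (1/s\<^sup>2 + 1)" using assms ab by simp
  have "1/t\<^sup>2 < 1/s\<^sup>2" using assms by (simp add: divide_strict_left_mono power_strict_mono)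
  then have 1: "sqrt (1 + t\<^sup>2) / t < sqrt (1 + s\<^sup>2) / s" unfolding a b by simp
  have "s\<^sup>2 \<le> t\<^sup>2" using assms by (simp add: power_mono)
  then have "sqrt (1 + s\<^sup>2) \<le> sqrt (1 + t\<^sup>2)" by simp
  then have "s + sqrt (1 + s\<^sup>2) \<le> t + sqrt (1 + t\<^sup>2)" using assms by linarith
  moreover have "0 < s + sqrt (1 + s\<^sup>2)" using assms by (simp add: add_pos_nonneg)
  ultimately have 2: "ln (s + sqrt (1 + s\<^sup>2)) \<le> ln (t + sqrt (1 + t\<^sup>2))" by simp
  show ?thesis unfolding psi_def using 1 2 by linarith
qed

lemma gamma0_pos: "gamma0 > 0"
proof -
  have p1: "psi 1 \<ge> 0"
  proof -
    have "0 < 1 + sqrt (2::real)" by (simp add: add_pos_nonneg)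
    then have "ln (1 + sqrt 2) \<le> sqrt 2" using ln_le_minus_one[of "1 + sqrt 2"] by simp
    then show ?thesis by (simp add: psi_def)
  qed
  have p10: "psi 10 \<le> 0"
  proof -
    have e2: "exp (2::real) = exp 1 * exp 1" using exp_add[of "1::real" 1] by simp
    have "exp 1 * exp 1 \<le> (3::real) * 3" using exp_le by (intro mult_mono) auto
    then have "exp (2::real) \<le> 10" using e2 by linarith
    then have "ln (exp 2) \<le> ln (10::real)" using ln_le_cancel_iff[of "exp 2" 10] by simp
    then have l2: "2 \<le> ln (10::real)" by simp
    have p: "0 < 10 + sqrt (1 + 10\<^sup>2::real)" by (intro add_pos_nonneg) auto
    have "(10::real) \<le> 10 + sqrt (1 + 10\<^sup>2)" by simp
    then have l3: "ln 10 \<le> ln (10 + sqrt (1 + 10\<^sup>2::real))"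
      using ln_le_cancel_iff[OF _ p, of 10] by simp
    have "(1 + 10\<^sup>2::real) \<le> 20\<^sup>2" by simp
    then have "sqrt (1 + 10\<^sup>2) \<le> sqrt (20\<^sup>2 :: real)" by (rule real_sqrt_le_mono)
    then have "sqrt (1 + 10\<^sup>2) \<le> (20::real)" by (simp only: real_sqrt_abs)
    then have "sqrt (1 + 10\<^sup>2) / 10 \<le> (2::real)" by simp
    then show ?thesis using l2 l3 unfolding psi_def by linarith
  qed
  have pos: "x + sqrt (1 + x\<^sup>2) > 0" if "x \<in> {1..10}" for x :: real
    using that by (simp add: add_pos_nonneg)
  have nz: "x \<noteq> 0" if "x \<in> {1..10}" for x :: real using that by simp
  have c1: "continuous_on {1..10} (\<lambda>t::real. sqrt (1 + t\<^sup>2) / t)"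
    by (rule continuous_on_divide) (auto intro!: continuous_intros)
  have c2: "continuous_on {1..10} (\<lambda>t::real. ln (t + sqrt (1 + t\<^sup>2)))"
  proof (rule continuous_on_ln)
    show "continuous_on {1..10} (\<lambda>t::real. t + sqrt (1 + t\<^sup>2))" by (intro continuous_intros)
    show "\<forall>x\<in>{1..10}. x + sqrt (1 + x\<^sup>2) \<noteq> 0" using pos by (metis less_irrefl)
  qed
  have cont: "continuous_on {1..10} psi"
    unfolding psi_def using continuous_on_diff[OF c1 c2] by simp
  obtain g where g: "1 \<le> g" "g \<le> 10" "psi g = 0"
    using IVT2'[of psi 10 0 1, OF p10 p1 _ cont] by auto
  have ex1: "\<exists>!g. g > 0 \<and> psi g = 0"
  proof
    show "g > 0 \<and> psi g = 0" using g by simp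
    fix h assume h: "h > 0 \<and> psi h = 0"
    show "h = g"
    proof (rule ccontr)
      assume "h \<noteq> g"
      then consider "h < g" | "g < h" by linarith
      then show False using psi_dec[of h g] psi_dec[of g h] h g by fastforce
    qed
  qed
  show ?thesis unfolding gamma0_def using theI'[OF ex1] by blast
qed

lemma periodic_int:
  fixes g :: "complex \<Rightarrow> complex"
  assumes per: "\<And>z. g (z + of_real p) = g z"
  shows "g (z + of_int l * of_real p) = g z"
proof -
  have pos: "g (z + of_nat n * of_real p) = g z" for n z
  proof (induction n arbitrary: z)
    case 0 then show ?case by simp
  next
    case (Suc n)
    have "g (z + of_nat (Suc n) * of_real p) = g ((z + of_nat n * of_real p) + of_real p)"
      by (simp add: algebra_simps)
    also have "\<dots> = g z" using per Suc by simp
    finally show ?case .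
  qed
  show ?thesis
  proof (cases "l \<ge> 0")
    case True
    then obtain n where "l = int n" by (intro that[of "nat l"]) simp
    then show ?thesis using pos by simp
  next
    case False
    then obtain n where n: "l = - int n" by (intro that[of "nat (-l)"]) simp
    have "g z = g ((z + of_int l * of_real p) + of_nat n * of_real p)" using n by simp
    then show ?thesis using pos by simp
  qed
qed

lemma three_lines_upper:
  fixes g :: "complex \<Rightarrow> complex" and L M :: real
  assumes hol: "g holomorphic_on UNIV"
    and per: "\<And>z. g (z + of_real (2*pi)) = g z"
    and b0: "\<And>x. norm (g (of_real x)) \<le> M"
    and b1: "\<And>x. norm (g (Complex x 1)) \<le> M * exp L"
    and y: "0 \<le> Im z" "Im z \<le> 1"
  shows "norm (g z) \<le> M * exp (L * Im z)"
proof -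
  define \<phi> where "\<phi> z = g z * exp (\<i> * of_real L * z)" for z
  have nphi: "norm (\<phi> z) = norm (g z) * exp (- (L * Im z))" for z
    by (simp add: \<phi>_def norm_mult)
  have holphi: "\<phi> holomorphic_on UNIV"
    unfolding \<phi>_def by (intro holomorphic_intros hol)
  have contphi: "continuous_on A \<phi>" for A
    using holomorphic_on_imp_continuous_on[OF holphi] continuous_on_subset by blast
  have pern: "norm (\<phi> (w + of_int l * of_real (2*pi))) = norm (\<phi> w)" for w l
    using periodic_int[of g "2*pi", OF per] by (simp add: nphi)
  define R where "R = {z. 0 \<le> Re z \<and> Re z \<le> 2*pi \<and> 0 \<le> Im z \<and> Im z \<le> 1}"
  have "bounded R"
  proof -
    have "R \<subseteq> cball 0 (2*pi + 1)"
    proof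
      fix z assume "z \<in> R"
      then have "cmod z \<le> \<bar>Re z\<bar> + \<bar>Im z\<bar>" by (rule_tac cmod_le)
      then show "z \<in> cball 0 (2*pi+1)" using \<open>z \<in> R\<close> by (auto simp: R_def)
    qed
    then show ?thesis using bounded_cball bounded_subset by blast
  qed
  moreover have "closed R" unfolding R_def
    by (intro closed_Collect_conj closed_Collect_le continuous_intros)
  ultimately have cR: "compact R" by (simp add: compact_eq_bounded_closed)
  have nR: "R \<noteq> {}" by (auto simp: R_def intro!: exI[of _ 0])
  have ctR: "continuous_on R (\<lambda>z. norm (\<phi> z))" using contphi by (intro continuous_on_norm)
  obtain z0 where z0R: "z0 \<in> R" and z0m: "\<forall>w\<in>R. norm (\<phi> w) \<le> norm (\<phi> z0)"
    using continuous_attains_sup[OF cR nR ctR] by blast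
  have z0: "z0 \<in> R" "\<And>w. w \<in> R \<Longrightarrow> norm (\<phi> w) \<le> norm (\<phi> z0)" using z0R z0m by auto
  have zmax: "norm (\<phi> w) \<le> norm (\<phi> z0)" if "0 \<le> Im w" "Im w \<le> 1" for w
  proof -
    define l where "l = \<lfloor>Re w / (2*pi)\<rfloor>"
    define w' where "w' = w + of_int (-l) * of_real (2*pi)"
    have "of_int l \<le> Re w / (2*pi)" "Re w / (2*pi) < of_int l + 1" unfolding l_def by linarith+
    then have "of_int l * (2*pi) \<le> Re w" "Re w < (of_int l + 1) * (2*pi)"
      by (simp_all add: field_simps)
    moreover have "(of_int l + 1) * (2*pi) = of_int l * (2*pi) + 2*pi" by (simp add: algebra_simps)
    moreover have "Re w' = Re w - of_int l * (2*pi)" "Im w' = Im w" by (simp_all add: w'_def)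
    ultimately have "w' \<in> R" using that unfolding R_def by simp
    moreover have "norm (\<phi> w') = norm (\<phi> w)" using pern[of w "-l"] unfolding w'_def .
    ultimately show ?thesis using z0(2) by fastforce
  qed
  have bound0: "norm (\<phi> z0) \<le> M"
  proof -
    consider "Im z0 = 0" | "Im z0 = 1" | "0 < Im z0 \<and> Im z0 < 1" using z0(1) by (force simp: R_def)
    then show ?thesis
    proof cases
      case 1
      then have "z0 = of_real (Re z0)" by (simp add: complex_eq_iff)
      then show ?thesis using b0[of "Re z0"] by (simp add: nphi 1)
    next
      case 2
      then have "z0 = Complex (Re z0) 1" by (simp add: complex_eq_iff)
      then have "norm (g z0) \<le> M * exp L" using b1 by metis
      then have "norm (g z0) * exp (- L) \<le> M * exp L * exp (- L)" by (rule mult_right_mono) simp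
      also have "M * exp L * exp (- L) = M" by (simp add: exp_minus)
      finally show ?thesis by (simp add: nphi 2)
    next
      case 3
      define U where "U = {z. 0 < Im z} \<inter> {z. Im z < 1}"
      have oU: "open U" unfolding U_def by (intro open_Int open_halfspace_Im_gt open_halfspace_Im_lt)
      have cU: "connected U" unfolding U_def
        by (intro convex_connected convex_Int convex_halfspace_Im_gt convex_halfspace_Im_lt)
      have z0U: "z0 \<in> U" using 3 by (simp add: U_def)
      have "\<phi> constant_on U"
        by (rule maximum_modulus_principle[OF holomorphic_on_subset[OF holphi] oU cU oU order_refl z0U])
           (auto simp: U_def intro!: zmax)
      then obtain c where c: "\<And>z. z \<in> U \<Longrightarrow> \<phi> z = c" by (auto simp: constant_on_def)
      have "(\<lambda>w. \<phi> w - c) 0 = 0"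
        by (rule analytic_continuation[of "\<lambda>w. \<phi> w - c" UNIV U z0])
           (auto intro!: holomorphic_intros holphi open_imp_islimpt oU z0U c)
      then have "\<phi> z0 = \<phi> 0" using c z0U by simp
      moreover have "norm (\<phi> 0) \<le> M" using b0[of 0] by (simp add: nphi)
      ultimately show ?thesis by simp
    qed
  qed
  have "norm (\<phi> z) \<le> M" using zmax[OF y] bound0 by linarith
  then have "norm (g z) * exp (- (L * Im z)) \<le> M" by (simp add: nphi)
  then have "norm (g z) * exp (- (L * Im z)) * exp (L * Im z) \<le> M * exp (L * Im z)"
    by (rule mult_right_mono) simp
  moreover have "norm (g z) * exp (- (L * Im z)) * exp (L * Im z) = norm (g z)"
    by (simp add: mult.assoc flip: exp_add)
  ultimately show ?thesis by simp
qed

lemma lip_real: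
  fixes g :: "complex \<Rightarrow> complex"
  assumes hol: "g holomorphic_on UNIV" and r: "r > 0"
    and bd: "\<And>z. \<bar>Im z\<bar> \<le> r \<Longrightarrow> norm (g z) \<le> B"
  shows "norm (g (of_real t) - g (of_real t')) \<le> B / r * \<bar>t - t'\<bar>"
proof -
  have dB: "norm (deriv g z) \<le> B / r" if "z \<in> \<real>" for z
  proof -
    have "norm ((deriv ^^ 1) g z) \<le> fact 1 * B / r ^ 1"
    proof (rule Cauchy_inequality)
      show "g holomorphic_on ball z r" using hol holomorphic_on_subset by blast
      show "continuous_on (cball z r) g"
        using holomorphic_on_imp_continuous_on[OF hol] continuous_on_subset by blast
      show "0 < r" by fact
      fix x assume x: "norm (z - x) = r"
      have "Im z = 0" using that by (simp add: complex_is_Real_iff)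
      then have "\<bar>Im x\<bar> = \<bar>Im (z - x)\<bar>" by simp
      also have "\<dots> \<le> norm (z - x)" by (rule abs_Im_le_cmod)
      finally show "norm (g x) \<le> B" using bd x by simp
    qed
    then show ?thesis by simp
  qed
  have "norm (g (of_real t) - g (of_real t')) \<le> B / r * norm (of_real t - of_real t' :: complex)"
  proof (rule field_differentiable_bound[OF convex_Reals])
    show "(g has_field_derivative deriv g z) (at z within \<real>)" for z
      by (rule holomorphic_derivI[OF hol]) auto
    show "norm (deriv g z) \<le> B / r" if "z \<in> \<real>" for z using dB that .
  qed auto
  then show ?thesis by (simp flip: of_real_diff)
qed

lemma multi_lip:
  fixes F :: "real^'m \<Rightarrow> complex"
  assumes K: "K \<ge> 0"
    and step: "\<And>\<theta> j t. norm (F \<theta> - F (\<chi> i. if i = j then t else \<theta>$i)) \<le> K * \<bar>\<theta>$j - t\<bar>"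
    and close: "\<And>i. \<bar>\<theta>$i - \<phi>$i\<bar> \<le> \<delta>"
  shows "norm (F \<theta> - F \<phi>) \<le> real CARD('m) * K * \<delta>"
proof -
  have "norm (F \<theta> - F (\<chi> i. if i \<in> S then \<phi>$i else \<theta>$i)) \<le> real (card S) * K * \<delta>"
    if "finite S" for S :: "'m set"
    using that
  proof (induction S rule: finite_induct)
    case empty
    then show ?case by simp
  next
    case (insert j S)
    define a where "a = (\<chi> i. if i \<in> S then \<phi>$i else \<theta>$i)"
    have eq: "(\<chi> i. if i \<in> insert j S then \<phi>$i else \<theta>$i) = (\<chi> i. if i = j then \<phi>$j else a$i)"
      by (simp add: vec_eq_iff a_def)
    have aj: "a$j = \<theta>$j" using insert(2) by (simp add: a_def)
    have "norm (F a - F (\<chi> i. if i = j then \<phi>$j else a$i)) \<le> K * \<bar>a$j - \<phi>$j\<bar>" by (rule step)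
    also have "\<dots> \<le> K * \<delta>" using close[of j] aj K by (simp add: mult_left_mono)
    finally have 2: "norm (F a - F (\<chi> i. if i = j then \<phi>$j else a$i)) \<le> K * \<delta>" .
    have 1: "norm (F \<theta> - F a) \<le> real (card S) * K * \<delta>" using insert(3) by (simp add: a_def)
    have "norm (F \<theta> - F (\<chi> i. if i \<in> insert j S then \<phi>$i else \<theta>$i)) \<le> real (card S) * K * \<delta> + K * \<delta>"
      unfolding eq by (rule norm_diff_triangle_le[OF 1 2])
    also have "\<dots> = real (card (insert j S)) * K * \<delta>" using insert(1,2) by (simp add: algebra_simps)
    finally show ?case .
  qed
  from this[of UNIV] show ?thesis by simp
qed

lemma slice_lip:
  fixes g :: "complex \<Rightarrow> complex" and M L k :: real
  assumes hol: "g holomorphic_on UNIV" and per: "\<And>z. g (z + of_real (2*pi)) = g z"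
    and b0: "\<And>x. norm (g (of_real x)) \<le> M"
    and b1: "\<And>z. \<bar>Im z\<bar> \<le> 1 \<Longrightarrow> norm (g z) \<le> M * exp L"
    and L: "L \<ge> 0" and k: "k \<ge> 1"
  shows "norm (g (of_real t) - g (of_real t')) \<le> M * exp (L / k) * k * \<bar>t - t'\<bar>"
proof -
  have M0: "M \<ge> 0" using b0[of 0] norm_ge_zero order_trans by blast
  have up: "norm (g z) \<le> M * exp (L * \<bar>Im z\<bar>)" if z1: "\<bar>Im z\<bar> \<le> 1" for z
  proof (cases "Im z \<ge> 0")
    case True
    have "norm (g z) \<le> M * exp (L * Im z)"
      by (rule three_lines_upper[OF hol per b0]) (use b1 True z1 in auto)
    then show ?thesis using True by simp
  next
    case False
    have hol2: "(\<lambda>z. g (- z)) holomorphic_on UNIV"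
      using holomorphic_on_compose[of uminus UNIV g] hol
      by (simp add: o_def holomorphic_on_subset holomorphic_intros)
    have "norm ((\<lambda>z. g (- z)) (- z)) \<le> M * exp (L * Im (- z))"
    proof (rule three_lines_upper[OF hol2])
      show "g (- (w + of_real (2*pi))) = g (- w)" for w
        using per[of "- (w + of_real (2*pi))"] by simp
      show "norm (g (- of_real x)) \<le> M" for x using b0[of "-x"] by simp
      show "norm (g (- Complex x 1)) \<le> M * exp L" for x using b1[of "- Complex x 1"] by simp
    qed (use False z1 in auto)
    then show ?thesis using False by simp
  qed
  have "norm (g z) \<le> M * exp (L / k)" if "\<bar>Im z\<bar> \<le> 1 / k" for z
  proof -
    have "1 / k \<le> 1" using k by simp
    then have "norm (g z) \<le> M * exp (L * \<bar>Im z\<bar>)" using up that by simp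
    also have "\<dots> \<le> M * exp (L / k)"
      using that L M0 by (intro mult_left_mono) (auto simp: mult_left_mono divide_inverse)
    finally show ?thesis .
  qed
  then have "norm (g (of_real t) - g (of_real t')) \<le> M * exp (L / k) / (1 / k) * \<bar>t - t'\<bar>"
    by (intro lip_real[OF hol]) (use k in auto)
  then show ?thesis by simp
qed


lemma cos_per_c: "cos (z + complex_of_real (2*pi)) = cos z"
proof -
  have c: "cos (complex_of_real (2*pi)) = 1" by (simp only: cos_of_real) simp
  have s: "sin (complex_of_real (2*pi)) = 0" by (simp only: sin_of_real) simp
  show ?thesis by (simp only: cos_add c s) simp
qed

theorem theoremT1p3:
  fixes b \<tau> :: real and n :: "nat \<Rightarrow> nat" and D :: "nat \<Rightarrow> real"
  assumes "b > 0" and "\<tau> > gamma0"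
    and "strict_mono n" and "\<And>N. n N > 0"
    and "\<And>N. D (n N) > 0"
    and "(\<lambda>N. D (n N) * exp (real (n N) * psi \<tau>)) \<longlonglongrightarrow> 0"
  shows "\<forall>\<gamma>>0. \<exists>C n0. \<forall>k \<in> range n. k \<ge> n0 \<longrightarrow>
     (\<exists>X :: (real^'m) set. finite X \<and> X \<noteq> {} \<and> X \<subseteq> cubeQ b \<and>
        real (card X) \<le> C * real k ^ CARD('m) \<and>
        (\<forall>f :: complex^'m \<Rightarrow> complex. entire_fun f \<and>
           (\<forall>w. cmod (f w) \<le> D k * supQ b f *
              exp (real k / (real CARD('m) * b * \<tau>) * (\<Sum>j\<in>UNIV. cmod (w $ j))))
           \<longrightarrow> supQ b f \<le> (1 + \<gamma>) * Max ((\<lambda>x. cmod (f (cembed x))) ` X)))"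
proof (intro allI impI)
  fix \<gamma> :: real assume \<gamma>: "\<gamma> > 0"
  define m where "m = CARD('m)"
  have m1: "real m \<ge> 1" unfolding m_def by (simp add: Suc_le_eq)
  have \<tau>: "\<tau> > 0" using gamma0_pos assms(2) by simp
  obtain N0 where N0: "\<And>N. N \<ge> N0 \<Longrightarrow> D (n N) * exp (real (n N) * psi \<tau>) < 1"
    using order_tendstoD(2)[OF assms(6), of 1] by (auto simp: eventually_sequentially)
  define c where "c = max 0 (- psi \<tau>)"
  have c0: "c \<ge> 0" by (simp add: c_def)
  have Dle: "D (n N) \<le> exp (c * real (n N))" if "N \<ge> N0" for N
  proof -
    have "D (n N) < exp (- (real (n N) * psi \<tau>))"
      using N0[OF that] by (simp add: exp_minus field_simps)
    also have "\<dots> \<le> exp (c * real (n N))"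
    proof -
      have "- psi \<tau> \<le> c" by (simp add: c_def)
      then have "(- psi \<tau>) * real (n N) \<le> c * real (n N)" by (rule mult_right_mono) simp
      then show ?thesis by (simp add: mult.commute)
    qed
    finally show ?thesis by simp
  qed
  define K0 where "K0 = exp (c + 3 / \<tau>)"
  have K0: "K0 > 0" by (simp add: K0_def)
  define \<epsilon> where "\<epsilon> = \<gamma> / (1 + \<gamma>)"
  have \<epsilon>: "\<epsilon> > 0" "1 - \<epsilon> = 1 / (1 + \<gamma>)" using \<gamma> by (auto simp: \<epsilon>_def field_simps)
  define h where "h = \<epsilon> / (real m * K0)"
  have h: "h > 0" using \<epsilon> K0 m1 by (simp add: h_def)
  define C where "C = (pi / h + 2) ^ m"
  show "\<exists>C n0. \<forall>k \<in> range n. k \<ge> n0 \<longrightarrow>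
     (\<exists>X :: (real^'m) set. finite X \<and> X \<noteq> {} \<and> X \<subseteq> cubeQ b \<and>
        real (card X) \<le> C * real k ^ CARD('m) \<and>
        (\<forall>f :: complex^'m \<Rightarrow> complex. entire_fun f \<and>
           (\<forall>w. cmod (f w) \<le> D k * supQ b f *
              exp (real k / (real CARD('m) * b * \<tau>) * (\<Sum>j\<in>UNIV. cmod (w $ j))))
           \<longrightarrow> supQ b f \<le> (1 + \<gamma>) * Max ((\<lambda>x. cmod (f (cembed x))) ` X)))"
  proof (intro exI[of _ C] exI[of _ "n N0"] ballI impI)
    fix k assume "k \<in> range n" "n N0 \<le> k"
    then obtain N where kN: "k = n N" and NN0: "N \<ge> N0"
      using strict_mono_less_eq[OF assms(3)] by auto
    have k1: "real k \<ge> 1" using assms(4)[of N] kN by simp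
    have Dk: "D k \<le> exp (c * real k)" "D k > 0" using Dle[OF NN0] assms(5)[of N] kN by auto
    define \<delta> where "\<delta> = h / real k"
    have \<delta>: "\<delta> > 0" using h k1 by (simp add: \<delta>_def)
    define Lk where "Lk = nat \<lceil>pi / \<delta>\<rceil>"
    define I where "I = PiE (UNIV::'m set) (\<lambda>_. {..Lk})"
    define pt where "pt l = (\<chi> i. b * cos (\<delta> * real (l i)))" for l :: "'m \<Rightarrow> nat"
    define X where "X = pt ` I"
    have finI: "finite I" by (simp add: I_def finite_PiE)
    have cardI: "card I = (Lk + 1) ^ m" by (simp add: I_def card_PiE m_def)
    have l0I: "(\<lambda>_. 0) \<in> I" by (simp add: I_def PiE_iff)
    have finX: "finite X" using finI by (simp add: X_def)
    have XnE: "X \<noteq> {}" using l0I by (auto simp: X_def)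
    have Xcube: "X \<subseteq> cubeQ b"
    proof
      fix x assume "x \<in> X"
      then obtain l where "x = pt l" by (auto simp: X_def)
      then show "x \<in> cubeQ b" using assms(1)
        by (auto simp: cubeQ_def pt_def abs_mult intro!: mult_left_le)
    qed
    have cardX: "real (card X) \<le> C * real k ^ CARD('m)"
    proof -
      have "real Lk \<le> pi / \<delta> + 1"
      proof -
        have pd: "0 < pi / \<delta>" using \<delta> by simp
        have "0 \<le> \<lceil>pi / \<delta>\<rceil>" using pd by (simp; linarith)
        then have "real Lk = of_int \<lceil>pi / \<delta>\<rceil>" by (simp add: Lk_def)
        then show ?thesis by simp
      qed
      also have "pi / \<delta> = pi / h * real k" using h k1 by (simp add: \<delta>_def)
      finally have "real (Lk + 1) \<le> pi / h * real k + 2" by simp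
      also have "\<dots> \<le> (pi / h + 2) * real k" using k1 by (simp add: algebra_simps)
      finally have Lk1: "real (Lk + 1) \<le> (pi / h + 2) * real k" .
      have "real (card X) \<le> real (card I)" unfolding X_def by (simp add: card_image_le finI)
      also have "\<dots> = real (Lk + 1) ^ m" by (simp add: cardI)
      also have "\<dots> \<le> ((pi / h + 2) * real k) ^ m" by (rule power_mono[OF Lk1]) simp
      also have "\<dots> = C * real k ^ CARD('m)" by (simp add: C_def m_def power_mult_distrib)
      finally show ?thesis .
    qed
    show "\<exists>X :: (real^'m) set. finite X \<and> X \<noteq> {} \<and> X \<subseteq> cubeQ b \<and>
        real (card X) \<le> C * real k ^ CARD('m) \<and>
        (\<forall>f :: complex^'m \<Rightarrow> complex. entire_fun f \<and>
           (\<forall>w. cmod (f w) \<le> D k * supQ b f *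
              exp (real k / (real CARD('m) * b * \<tau>) * (\<Sum>j\<in>UNIV. cmod (w $ j))))
           \<longrightarrow> supQ b f \<le> (1 + \<gamma>) * Max ((\<lambda>x. cmod (f (cembed x))) ` X))"
    proof (intro exI[of _ X] conjI allI impI finX XnE Xcube cardX)
      fix f :: "complex^'m \<Rightarrow> complex"
      assume fa: "entire_fun f \<and> (\<forall>w. cmod (f w) \<le> D k * supQ b f *
              exp (real k / (real CARD('m) * b * \<tau>) * (\<Sum>j\<in>UNIV. cmod (w $ j))))"
      define M where "M = supQ b f"
      define \<sigma> where "\<sigma> = real k / (real m * b * \<tau>)"
      have \<sigma>0: "\<sigma> \<ge> 0" using assms(1) \<tau> by (simp add: \<sigma>_def)
      have \<sigma>mb: "\<sigma> * (real m * b) = real k / \<tau>" using assms(1) m1 by (simp add: \<sigma>_def)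
      have ent: "entire_fun f" using fa by blast
      have gr: "\<And>w. cmod (f w) \<le> D k * M * exp (\<sigma> * (\<Sum>j\<in>UNIV. cmod (w $ j)))"
        using fa by (simp add: M_def \<sigma>_def m_def)
      define Mx where "Mx = Max ((\<lambda>x. cmod (f (cembed x))) ` X)"
      have Mx0: "Mx \<ge> 0"
      proof -
        have "cmod (f (cembed (pt (\<lambda>_. 0)))) \<le> Mx"
          unfolding Mx_def using finX l0I by (intro Max_ge) (auto simp: X_def)
        then show ?thesis using norm_ge_zero order_trans by blast
      qed
      show "supQ b f \<le> (1 + \<gamma>) * Max ((\<lambda>x. cmod (f (cembed x))) ` X)"
      proof (cases "M \<le> 0")
        case True
        then show ?thesis using Mx0 \<gamma> unfolding M_def Mx_def
          by (meson add_nonneg_nonneg less_imp_le mult_nonneg_nonneg order_trans zero_le_one)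
      next
        case False
        then have M0: "M > 0" by simp
        have cubeb: "cmod (f (cembed x)) \<le> D k * M * exp (\<sigma> * (real m * b))" if "x \<in> cubeQ b" for x
        proof -
          have "(\<Sum>j\<in>UNIV. cmod (cembed x $ j)) \<le> of_nat (card (UNIV::'m set)) * b"
            using that by (intro sum_bounded_above) (simp add: cembed_def cubeQ_def)
          then have "(\<Sum>j\<in>UNIV. cmod (cembed x $ j)) \<le> real m * b" by (simp add: m_def)
          then have "exp (\<sigma> * (\<Sum>j\<in>UNIV. cmod (cembed x $ j))) \<le> exp (\<sigma> * (real m * b))"
            using \<sigma>0 by (simp add: mult_left_mono)
          then show ?thesis using gr[of "cembed x"] Dk M0
            by (meson less_imp_le mult_left_mono mult_nonneg_nonneg order_trans)
        qed
        have bdd: "bdd_above ((\<lambda>x. cmod (f (cembed x))) ` cubeQ b)"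
          by (rule bdd_aboveI2) (rule cubeb)
        have inM: "cmod (f (cembed x)) \<le> M" if "x \<in> cubeQ b" for x
          unfolding M_def supQ_def using bdd that by (intro cSup_upper) auto
        define F where "F \<theta> = f (cembed (\<chi> i. b * cos (\<theta>$i)))" for \<theta> :: "real^'m"
        have step: "norm (F \<theta> - F (\<chi> i. if i = j then t else \<theta>$i)) \<le> (M * K0 * real k) * \<bar>\<theta>$j - t\<bar>"
          for \<theta> j t
        proof -
          define e :: "complex^'m" where "e = (\<chi> i. if i = j then 1 else 0)"
          define c0 :: "complex^'m" where "c0 = (\<chi> i. if i = j then 0 else of_real (b * cos (\<theta>$i)))"
          define g where "g z = f ((of_real b * cos z) *s e + c0)" for z
          have geq: "g (of_real s) = F (\<chi> i. if i = j then s else \<theta>$i)" for s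
            unfolding g_def F_def
            by (rule arg_cong[where f=f]) (simp add: vec_eq_iff cembed_def c0_def e_def cos_of_real)
          have Feq: "F \<theta> = g (of_real (\<theta>$j))"
          proof -
            have "(\<chi> i. if i = j then \<theta>$j else \<theta>$i) = \<theta>" by (simp add: vec_eq_iff)
            then show ?thesis using geq[of "\<theta>$j"] by simp
          qed
          have hol: "g holomorphic_on UNIV"
          proof -
            have "g field_differentiable (at z)" for z
            proof -
              have "((\<lambda>z. of_real b * cos z) has_field_derivative (of_real b * - sin z)) (at z)"
                by (auto intro!: derivative_eq_intros)
              from slice_deriv[OF ent this, of e c0] show ?thesis
                unfolding g_def field_differentiable_def by blast
            qed
            then show ?thesis by (simp add: holomorphic_on_def field_differentiable_at_within)
          qed
          have per: "g (z + of_real (2*pi)) = g z" for z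
            unfolding g_def by (simp only: cos_per_c)
          have b0: "norm (g (of_real x)) \<le> M" for x
          proof -
            have "(\<chi> i. b * cos ((\<chi> i. if i = j then x else \<theta>$i) $ i)) \<in> cubeQ b"
              using assms(1) by (auto simp: cubeQ_def abs_mult intro!: mult_left_le)
            then show ?thesis using inM geq[of x] unfolding F_def by metis
          qed
          define L where "L = c * real k + 3 * real k / \<tau>"
          have L0: "L \<ge> 0" using c0 \<tau> by (simp add: L_def)
          have b1: "norm (g z) \<le> M * exp L" if z1: "\<bar>Im z\<bar> \<le> 1" for z
          proof -
            have e3: "exp \<bar>Im z\<bar> \<le> 3" using z1 exp_le order_trans by (metis exp_le_cancel_iff)
            have comp: "cmod (((of_real b * cos z) *s e + c0) $ i) \<le> b * 3" for i
            proof (cases "i = j")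
              case True
              have "cmod (of_real b * cos z) \<le> b * exp \<bar>Im z\<bar>"
                using assms(1) cos_bound[of z] by (simp add: norm_mult mult_left_mono)
              also have "\<dots> \<le> b * 3" using e3 assms(1) by simp
              finally show ?thesis using True by (simp add: c0_def e_def vector_scalar_mult_def)
            next
              case False
              have "\<bar>b * cos (\<theta>$i)\<bar> \<le> b" using assms(1)
                by (auto simp: abs_mult intro!: mult_left_le)
              moreover have "cmod (((of_real b * cos z) *s e + c0) $ i) = \<bar>b * cos (\<theta>$i)\<bar>"
                using False by (simp add: c0_def e_def vector_scalar_mult_def norm_mult abs_mult)
              ultimately show ?thesis using assms(1) by linarith
            qed
            have "(\<Sum>i\<in>UNIV. cmod (((of_real b * cos z) *s e + c0) $ i)) \<le> of_nat (card (UNIV::'m set)) * (b * 3)"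
              by (intro sum_bounded_above comp)
            then have "\<sigma> * (\<Sum>i\<in>UNIV. cmod (((of_real b * cos z) *s e + c0) $ i)) \<le> \<sigma> * (real m * b) * 3"
              using \<sigma>0 by (simp add: m_def mult_left_mono mult_ac)
            also have "\<dots> = 3 * real k / \<tau>" using \<sigma>mb by simp
            finally have ex: "exp (\<sigma> * (\<Sum>i\<in>UNIV. cmod (((of_real b * cos z) *s e + c0) $ i))) \<le> exp (3 * real k / \<tau>)"
              by simp
            have "norm (g z) \<le> D k * M * exp (\<sigma> * (\<Sum>i\<in>UNIV. cmod (((of_real b * cos z) *s e + c0) $ i)))"
              unfolding g_def by (rule gr)
            also have "\<dots> \<le> exp (c * real k) * M * exp (3 * real k / \<tau>)"
              using Dk M0 ex by (intro mult_mono) auto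
            also have "\<dots> = M * exp L" by (simp add: L_def exp_add)
            finally show ?thesis .
          qed
          have "norm (g (of_real (\<theta>$j)) - g (of_real t)) \<le> M * exp (L / real k) * real k * \<bar>\<theta>$j - t\<bar>"
            by (rule slice_lip[OF hol per b0 b1 L0 k1])
          moreover have "L / real k = c + 3 / \<tau>" using k1 by (simp add: L_def field_simps)
          ultimately show ?thesis using Feq geq[of t] by (simp add: K0_def)
        qed
        have close: "norm (F \<theta> - F \<phi>) \<le> \<epsilon> * M" if "\<And>i. \<bar>\<theta>$i - \<phi>$i\<bar> \<le> \<delta>" for \<theta> \<phi>
        proof -
          have "norm (F \<theta> - F \<phi>) \<le> real CARD('m) * (M * K0 * real k) * \<delta>"
            by (rule multi_lip[OF _ step that]) (use M0 K0 in simp)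
          also have "\<dots> = \<epsilon> * M" using K0 m1 k1 by (simp add: m_def[symmetric] \<delta>_def h_def field_simps)
          finally show ?thesis .
        qed
        have main: "cmod (f (cembed x)) \<le> Mx + \<epsilon> * M" if x: "x \<in> cubeQ b" for x
        proof -
          have xb: "- 1 \<le> x$i / b" "x$i / b \<le> 1" for i
          proof -
            have "\<bar>x$i\<bar> \<le> b" using x by (simp add: cubeQ_def)
            then have "- b \<le> x$i" "x$i \<le> b" by linarith+
            then show "- 1 \<le> x$i / b" "x$i / b \<le> 1" using assms(1) by (simp_all add: divide_le_eq le_divide_eq)
          qed
          define \<theta> where "\<theta> = (\<chi> i. arccos (x$i / b))"
          have \<theta>r: "0 \<le> \<theta>$i" "\<theta>$i \<le> pi" for i
            using arccos_lbound[OF xb] arccos_ubound[OF xb] by (auto simp: \<theta>_def)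
          have xeq: "(\<chi> i. b * cos (\<theta>$i)) = x" using xb assms(1) by (simp add: vec_eq_iff \<theta>_def)
          define l where "l i = nat \<lfloor>\<theta>$i / \<delta>\<rfloor>" for i
          have lI: "l \<in> I"
          proof -
            have "l i \<le> Lk" for i
            proof -
              have "\<theta>$i / \<delta> \<le> pi / \<delta>" using \<theta>r \<delta> by (simp add: divide_right_mono)
              then have "\<lfloor>\<theta>$i / \<delta>\<rfloor> \<le> \<lceil>pi / \<delta>\<rceil>"
                by (meson floor_le_ceiling floor_mono order_trans)
              then show ?thesis unfolding l_def Lk_def by (simp add: nat_mono)
            qed
            then show ?thesis by (simp add: I_def PiE_iff)
          qed
          define \<phi> where "\<phi> = (\<chi> i. \<delta> * real (l i))"
          have cl: "\<bar>\<theta>$i - \<phi>$i\<bar> \<le> \<delta>" for i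
          proof -
            have q0: "0 \<le> \<theta>$i / \<delta>" using \<theta>r \<delta> by simp
            have "real (l i) = of_int \<lfloor>\<theta>$i / \<delta>\<rfloor>" using q0 by (simp add: l_def)
            then have "real (l i) \<le> \<theta>$i / \<delta>" "\<theta>$i / \<delta> < real (l i) + 1" by linarith+
            then have "\<delta> * real (l i) \<le> \<theta>$i" "\<theta>$i < \<delta> * real (l i) + \<delta>"
              using \<delta> by (simp_all add: field_simps)
            then show ?thesis by (simp add: \<phi>_def)
          qed
          have Fphi: "F \<phi> = f (cembed (pt l))" by (simp add: F_def pt_def \<phi>_def)
          have "cmod (F \<phi>) \<le> Mx"
            unfolding Fphi Mx_def using finX lI by (intro Max_ge) (auto simp: X_def)
          moreover have "cmod (F \<theta>) \<le> cmod (F \<phi>) + \<epsilon> * M"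
            using close[OF cl] norm_triangle_ineq2[of "F \<theta>" "F \<phi>"] by simp
          moreover have "F \<theta> = f (cembed x)" by (simp add: F_def xeq)
          ultimately show ?thesis by simp
        qed
        have cnE: "cubeQ b \<noteq> {}" using assms(1) by (auto simp: cubeQ_def intro!: exI[of _ 0])
        have "supQ b f \<le> Mx + \<epsilon> * M" unfolding supQ_def
        proof (rule cSup_least)
          show "(\<lambda>x. cmod (f (cembed x))) ` cubeQ b \<noteq> {}" using cnE by blast
          fix y assume "y \<in> (\<lambda>x. cmod (f (cembed x))) ` cubeQ b"
          then show "y \<le> Mx + \<epsilon> * M" using main by blast
        qed
        then have "M \<le> Mx + \<epsilon> * M" by (simp only: M_def)
        then have "(1 - \<epsilon>) * M \<le> Mx" by (simp add: algebra_simps)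
        then have "M / (1 + \<gamma>) \<le> Mx" using \<epsilon>(2) by simp
        then show ?thesis using \<gamma> unfolding M_def Mx_def by (simp add: field_simps)
      qed
    qed
  qed
qed

end
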